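(* Fix $\lambda_p,\lambda_s\in(0,1)$ and $p_q\in(0,1)$, and consider $p_a\in[0,1]$ ranging over values for which $(\lambda_p,\lambda_s)$ is in the stable region, i.e. $\lambda_p<\frac{f_{sd}(1-p_q)\mu_p}{f_{sd}(1-p_q)+p_a f_{ps}(1-f_{pd})}$ and $\lambda_s<p_q f_{sd}(1-\lambda_p/\mu_p)$ with $\mu_p=f_{pd}+p_a f_{ps}(1-f_{pd})$. Then the average PU delay $D_p$ is monotonically decreasing in $p_a$ if $p_q<1-\frac{f_{pd}}{f_{sd}}$, monotonically increasing in $p_a$ if $p_q>1-\frac{f_{pd}}{f_{sd}}$ (and constant in $p_a$ if $p_q=1-\frac{f_{pd}}{f_{sd}}$), while the average SU delay $D_s$ is monotonically decreasing in $p_a$ for every $p_q\in(0,1)$.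
   Context: Constants $f_{pd},f_{ps},f_{sd}\in(0,1)$ with $f_{pd}<f_{sd}$. Set $a=p_a f_{ps}(1-f_{pd})$, $\mu_p=f_{pd}+a$. $D_p=(N_p+N_{sp})/\lambda_p$ and $D_s=N_s/\lambda_s$, where $N_p=\frac{\lambda_p-\lambda_p^2}{\mu_p-\lambda_p}$, $N_{sp}=\frac{m\lambda_p^2+n\lambda_p}{\alpha\lambda_p^2+\beta\lambda_p+\gamma}$, $N_s=\frac{\lambda_p\lambda_s A+(\lambda_s^2-\lambda_s)B(B+\lambda_p)}{BC}$ with $m=a\big[\frac{(1-p_q)f_{sd}-f_{pd}}{\mu_p}-(1-p_q)f_{sd}-a\big]$, $n=a\mu_p$, $\alpha=(1-p_q)f_{sd}+a$, $\beta=\mu_p[-2(1-p_q)f_{sd}-a]$, $\gamma=(1-p_q)f_{sd}\mu_p^2$, $A=p_q f_{sd}(\mu_p-1)$, $B=\mu_p-\lambda_p$, $C=(\lambda_s-p_q f_{sd})\mu_p+p_q f_{sd}\lambda_p$. These are the average packet delays of the PU and SU in a cognitive relaying system where the SU serves its own queue w.p. $p_q$ (relay queue w.p. $1-p_q$) when the PU is idle, and admits undelivered overheard PU packets to its relay queue w.p. $p_a$. *)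

theory Defs
  imports Complex_Main
begin

definition a_val :: "real \<Rightarrow> real \<Rightarrow> real \<Rightarrow> real" where
  "a_val fpd fps pa = pa * fps * (1 - fpd)"

definition mu_p :: "real \<Rightarrow> real \<Rightarrow> real \<Rightarrow> real" where
  "mu_p fpd fps pa = fpd + a_val fpd fps pa"

definition N_p :: "real \<Rightarrow> real \<Rightarrow> real \<Rightarrow> real \<Rightarrow> real" where
  "N_p fpd fps pa lp = (lp - lp^2) / (mu_p fpd fps pa - lp)"

definition N_sp :: "real \<Rightarrow> real \<Rightarrow> real \<Rightarrow> real \<Rightarrow> real \<Rightarrow> real \<Rightarrow> real" where
  "N_sp fpd fps fsd pq pa lp =
    (let a = a_val fpd fps pa; mu = mu_p fpd fps pa;
         m = a * (((1 - pq) * fsd - fpd) / mu - (1 - pq) * fsd - a);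
         n = a * mu;
         \<alpha> = (1 - pq) * fsd + a;
         \<beta> = mu * (- 2 * (1 - pq) * fsd - a);
         \<gamma> = (1 - pq) * fsd * mu^2
     in (m * lp^2 + n * lp) / (\<alpha> * lp^2 + \<beta> * lp + \<gamma>))"

definition N_s :: "real \<Rightarrow> real \<Rightarrow> real \<Rightarrow> real \<Rightarrow> real \<Rightarrow> real \<Rightarrow> real \<Rightarrow> real" where
  "N_s fpd fps fsd pq pa lp ls =
    (let mu = mu_p fpd fps pa;
         A = pq * fsd * (mu - 1);
         B = mu - lp;
         C = (ls - pq * fsd) * mu + pq * fsd * lp
     in (lp * ls * A + (ls^2 - ls) * B * (B + lp)) / (B * C))"

definition D_p :: "real \<Rightarrow> real \<Rightarrow> real \<Rightarrow> real \<Rightarrow> real \<Rightarrow> real \<Rightarrow> real" where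
  "D_p fpd fps fsd pq pa lp = (N_p fpd fps pa lp + N_sp fpd fps fsd pq pa lp) / lp"

definition D_s :: "real \<Rightarrow> real \<Rightarrow> real \<Rightarrow> real \<Rightarrow> real \<Rightarrow> real \<Rightarrow> real \<Rightarrow> real" where
  "D_s fpd fps fsd pq pa lp ls = N_s fpd fps fsd pq pa lp ls / ls"

definition stable :: "real \<Rightarrow> real \<Rightarrow> real \<Rightarrow> real \<Rightarrow> real \<Rightarrow> real \<Rightarrow> real \<Rightarrow> bool" where
  "stable fpd fps fsd pq pa lp ls \<longleftrightarrow>
     lp < fsd * (1 - pq) * mu_p fpd fps pa / (fsd * (1 - pq) + pa * fps * (1 - fpd)) \<and>
     ls < pq * fsd * (1 - lp / mu_p fpd fps pa)"

definition PA_set :: "real \<Rightarrow> real \<Rightarrow> real \<Rightarrow> real \<Rightarrow> real \<Rightarrow> real \<Rightarrow> real set" where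
  "PA_set fpd fps fsd pq lp ls = {pa. 0 \<le> pa \<and> pa \<le> 1 \<and> stable fpd fps fsd pq pa lp ls}"

end

theory Submission imports Defs begin


definition NmF :: "real \<Rightarrow> real \<Rightarrow> real \<Rightarrow> real \<Rightarrow> real" where
  "NmF F f l t = (1-F)*t^3 + ((F-f) - l*(1-f))*t^2 + f*l*(F-f)*t - f*l*(F-f)"
definition DnF :: "real \<Rightarrow> real \<Rightarrow> real \<Rightarrow> real \<Rightarrow> real" where
  "DnF F f l t = t*(t-l)*((F-l)*t - l*(F-f))"
definition GF :: "real \<Rightarrow> real \<Rightarrow> real \<Rightarrow> real \<Rightarrow> real" where
  "GF F f l t = 1 + NmF F f l t / DnF F f l t"

definition BF :: "real \<Rightarrow> real \<Rightarrow> real \<Rightarrow> real \<Rightarrow> real" where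
  "BF F f l t = (((t-f)*t*(t*(1-l)+l*(1-t)) + f*(t-l)^2)*((F-l)*t - l*(F-f))
        + l*t*(t-f)*((t-l)^2 + l*(t-f)*(1-t)))"

lemma GF_deriv:
  assumes "DnF F f l t \<noteq> 0"
  shows "((GF F f l) has_real_derivative
     (-(F-f) * BF F f l t / (DnF F f l t * DnF F f l t))) (at t)"
proof -
  have dN: "((NmF F f l) has_real_derivative
     (3*(1-F)*t^2 + 2*((F-f) - l*(1-f))*t + f*l*(F-f))) (at t)"
    unfolding NmF_def[abs_def]
    by (rule derivative_eq_intros refl | simp add: algebra_simps)+
  have dD: "((DnF F f l) has_real_derivative
     ((t-l)*((F-l)*t - l*(F-f)) + t*((F-l)*t - l*(F-f)) + t*(t-l)*(F-l))) (at t)"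
    unfolding DnF_def[abs_def]
    by (rule derivative_eq_intros refl | simp add: algebra_simps)+
  have "((\<lambda>t. 1 + NmF F f l t / DnF F f l t) has_real_derivative
     0 + ((3*(1-F)*t^2 + 2*((F-f) - l*(1-f))*t + f*l*(F-f)) * DnF F f l t - NmF F f l t *
       ((t-l)*((F-l)*t - l*(F-f)) + t*((F-l)*t - l*(F-f)) + t*(t-l)*(F-l))) / (DnF F f l t * DnF F f l t)) (at t)"
    by (intro DERIV_add DERIV_const DERIV_divide dN dD assms)
  moreover have "(3*(1-F)*t^2 + 2*((F-f) - l*(1-f))*t + f*l*(F-f)) * DnF F f l t - NmF F f l t *
       ((t-l)*((F-l)*t - l*(F-f)) + t*((F-l)*t - l*(F-f)) + t*(t-l)*(F-l))
     = -(F-f) * BF F f l t"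
    unfolding NmF_def DnF_def BF_def by algebra
  ultimately show ?thesis unfolding GF_def[abs_def] by simp
qed

lemma BF_pos:
  assumes "0<f" "f \<le> t" "t \<le> 1" "l<t" "0<l" "l<1" "(F-l)*t - l*(F-f) > 0"
  shows "BF F f l t > 0"
proof -
  have "t*(1-l)+l*(1-t) \<ge> 0" using assms by (intro add_nonneg_nonneg mult_nonneg_nonneg) auto
  hence h1: "(t-f)*t*(t*(1-l)+l*(1-t)) \<ge> 0" using assms by (intro mult_nonneg_nonneg) auto
  have h2: "f*(t-l)^2 > 0" using assms by simp
  have h3: "(((t-f)*t*(t*(1-l)+l*(1-t)) + f*(t-l)^2)*((F-l)*t - l*(F-f))) > 0"
    using h1 h2 assms(7) by (intro mult_pos_pos) auto
  have "(t-l)^2 + l*(t-f)*(1-t) \<ge> 0" using assms by (intro add_nonneg_nonneg mult_nonneg_nonneg) auto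
  hence h4: "l*t*(t-f)*((t-l)^2 + l*(t-f)*(1-t)) \<ge> 0" using assms by (intro mult_nonneg_nonneg) auto
  show ?thesis unfolding BF_def using h3 h4 by linarith
qed

lemma GF_strict:
  assumes "a < b" "0<f" "0<l" "l<1"
    and c: "\<And>t. a \<le> t \<Longrightarrow> t \<le> b \<Longrightarrow> f \<le> t \<and> t \<le> 1 \<and> l < t \<and> (F-l)*t - l*(F-f) > 0"
  shows "F > f \<Longrightarrow> GF F f l b < GF F f l a" and "F < f \<Longrightarrow> GF F f l a < GF F f l b"
proof -
  have D: "\<exists>y. (GF F f l has_real_derivative y) (at t) \<and> y = -(F-f) * BF F f l t / (DnF F f l t * DnF F f l t)
     \<and> BF F f l t > 0 \<and> DnF F f l t * DnF F f l t > 0" if "a \<le> t" "t \<le> b" for t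
  proof -
    from c[OF that] have ct: "f \<le> t" "t \<le> 1" "l < t" "(F-l)*t - l*(F-f) > 0" by auto
    have "DnF F f l t > 0" unfolding DnF_def using ct assms by (intro mult_pos_pos) auto
    moreover have "BF F f l t > 0" using BF_pos ct assms by auto
    ultimately show ?thesis using GF_deriv[of F f l t] by auto
  qed
  show "F > f \<Longrightarrow> GF F f l b < GF F f l a"
  proof (rule DERIV_neg_imp_decreasing[OF assms(1)])
    fix t assume "F > f" "a \<le> t" "t \<le> b"
    then obtain y where "(GF F f l has_real_derivative y) (at t)" "y = -(F-f) * BF F f l t / (DnF F f l t * DnF F f l t)"
       "BF F f l t > 0" "DnF F f l t * DnF F f l t > 0" using D by blast
    moreover have "y < 0"
    proof -
      have "-(F-f) * BF F f l t < 0" using calculation \<open>F > f\<close> by (intro mult_neg_pos) auto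
      thus ?thesis using calculation by (simp add: divide_neg_pos)
    qed
    ultimately show "\<exists>y. (GF F f l has_real_derivative y) (at t) \<and> y < 0" by blast
  qed
  show "F < f \<Longrightarrow> GF F f l a < GF F f l b"
  proof (rule DERIV_pos_imp_increasing[OF assms(1)])
    fix t assume "F < f" "a \<le> t" "t \<le> b"
    then obtain y where "(GF F f l has_real_derivative y) (at t)" "y = -(F-f) * BF F f l t / (DnF F f l t * DnF F f l t)"
       "BF F f l t > 0" "DnF F f l t * DnF F f l t > 0" using D by blast
    moreover have "y > 0"
    proof -
      have "-(F-f) * BF F f l t > 0" using calculation \<open>F < f\<close> by (intro mult_pos_pos) auto
      thus ?thesis using calculation by (simp add: divide_pos_pos)
    qed
    ultimately show "\<exists>y. (GF F f l has_real_derivative y) (at t) \<and> y > 0" by blast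
  qed
qed

lemma GF_const:
  assumes "0 < t" "l < t" "(f-l)*t - l*(f-f) > 0"
  shows "GF f f l t = 1 + (1-f)/(f-l)"
proof -
  have "f - l \<noteq> 0" using assms by auto
  have N: "NmF f f l t = (1-f)*(t*(t*(t-l)))" unfolding NmF_def by (simp add: algebra_simps power2_eq_square power3_eq_cube)
  have D: "DnF f f l t = (f-l)*(t*(t*(t-l)))" unfolding DnF_def by (simp add: algebra_simps)
  have "t*(t*(t-l)) \<noteq> 0" using assms by auto
  thus ?thesis unfolding GF_def N D by simp
qed

lemma Dp_eq:
  fixes fpd fps fsd pq pa lp :: real
  assumes "0 < lp" "lp < mu_p fpd fps pa"
    and "((1-pq)*fsd - lp) * mu_p fpd fps pa - lp*((1-pq)*fsd - fpd) > 0"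
  shows "D_p fpd fps fsd pq pa lp = GF ((1-pq)*fsd) fpd lp (mu_p fpd fps pa)"
proof -
  define a where "a = a_val fpd fps pa"
  define mu where "mu = mu_p fpd fps pa"
  define F where "F = (1-pq)*fsd"
  have amu: "a = mu - fpd" unfolding a_def mu_def mu_p_def by simp
  have den: "((1 - pq) * fsd + a) * lp^2 + mu * (- 2 * (1 - pq) * fsd - a) * lp + (1 - pq) * fsd * mu^2
     = (mu-lp)*((F-lp)*mu - lp*(F-fpd))" unfolding amu F_def by algebra
  have nz: "lp \<noteq> 0" "mu - lp \<noteq> 0" "mu \<noteq> 0" "(F-lp)*mu - lp*(F-fpd) \<noteq> 0"
    using assms unfolding mu_def F_def by auto
  define U where "U = mu - lp"
  define V where "V = (F-lp)*mu - lp*(F-fpd)"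
  have nz2: "U \<noteq> 0" "V \<noteq> 0" using nz unfolding U_def V_def by auto
  have "D_p fpd fps fsd pq pa lp = ((lp - lp^2)/U + 
     (a * ((F - fpd) / mu - F - a) * lp^2 + a * mu * lp)/(U*V))/lp"
    unfolding D_p_def N_p_def N_sp_def Let_def a_def[symmetric] mu_def[symmetric] den
    unfolding F_def U_def V_def by simp
  also have "\<dots> = ((lp - lp^2)*mu*V + (a * ((F - fpd) - F*mu - a*mu) * lp^2 + a * mu*mu * lp))/(mu*U*V*lp)"
    using nz nz2 by (simp add: field_simps)
  also have "\<dots> = (mu*U*V + NmF F fpd lp mu) * lp / (mu*U*V*lp)"
    unfolding NmF_def  
    by (rule arg_cong[where f="\<lambda>x. x / (mu*U*V*lp)"]) (unfold U_def V_def amu, algebra)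
  also have "\<dots> = GF F fpd lp mu"
    unfolding GF_def DnF_def using nz nz2 unfolding U_def[symmetric] V_def[symmetric]
    by (simp add: field_simps)
  finally show ?thesis unfolding F_def mu_def .
qed

lemma S_facts:
  fixes fpd fps fsd pq lp ls pa :: real
  assumes "0 < fpd" "fpd < 1" "0 < fps" "fps < 1" "0 < fsd" "fsd < 1"
    and "0 < lp" "lp < 1" "0 < ls" "ls < 1" "0 < pq" "pq < 1"
    and "pa \<in> PA_set fpd fps fsd pq lp ls"
  shows "fpd \<le> mu_p fpd fps pa" "mu_p fpd fps pa < 1" "lp < mu_p fpd fps pa"
    "((1-pq)*fsd - lp) * mu_p fpd fps pa - lp*((1-pq)*fsd - fpd) > 0"
    "ls * mu_p fpd fps pa < pq*fsd*(mu_p fpd fps pa - lp)"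
proof -
  define mu where "mu = mu_p fpd fps pa"
  define a where "a = pa * fps * (1 - fpd)"
  define F where "F = (1-pq)*fsd"
  have pa: "0 \<le> pa" "pa \<le> 1" "stable fpd fps fsd pq pa lp ls" using assms(13) unfolding PA_set_def by auto
  have mu: "mu = fpd + a" unfolding mu_def a_def mu_p_def a_val_def by simp
  have a0: "a \<ge> 0" unfolding a_def using pa assms by simp
  have a1: "a \<le> fps * (1-fpd)" unfolding a_def using pa assms by (simp add: mult_left_le_one_le)
  have "fps * (1-fpd) < 1 - fpd" using assms by simp
  with a1 have mu1: "mu < 1" unfolding mu by linarith
  have F0: "F > 0" unfolding F_def using assms by simp
  have "lp < F * mu / (F + a)" using pa(3) unfolding stable_def F_def a_def mu_def by (simp add: mult.commute)
  hence v1: "lp * (F + a) < F * mu" using F0 a0 by (simp add: pos_less_divide_eq)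
  have v: "(F - lp) * mu - lp*(F - fpd) > 0" using v1 unfolding mu by (simp add: algebra_simps)
  have "lp * F < F * mu" using v1 a0 assms by (smt (verit) mult_left_mono)
  hence lmu: "lp < mu" using F0 by (simp add: mult.commute)
  have mu0: "mu > 0" using lmu assms by simp
  have "ls < pq * fsd * (1 - lp / mu)" using pa(3) unfolding stable_def mu_def by simp
  hence "ls * mu < pq * fsd * (1 - lp / mu) * mu" using mu0 by simp
  also have "\<dots> = pq*fsd*(mu - lp)" using mu0 by (simp add: field_simps)
  finally have "ls * mu < pq*fsd*(mu - lp)" .
  thus "fpd \<le> mu_p fpd fps pa" "mu_p fpd fps pa < 1" "lp < mu_p fpd fps pa"
    "((1-pq)*fsd - lp) * mu_p fpd fps pa - lp*((1-pq)*fsd - fpd) > 0"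
    "ls * mu_p fpd fps pa < pq*fsd*(mu_p fpd fps pa - lp)"
    using mu a0 mu1 lmu v unfolding mu_def F_def by auto
qed

lemma Ds_eq:
  fixes fpd fps fsd pq lp ls pa :: real
  assumes "0 < ls" "lp < mu_p fpd fps pa" "0 < lp"
    and "ls * mu_p fpd fps pa < pq*fsd*(mu_p fpd fps pa - lp)"
  shows "D_s fpd fps fsd pq pa lp ls = lp*(pq*fsd)*(1-mu_p fpd fps pa)/((mu_p fpd fps pa - lp)*(pq*fsd*(mu_p fpd fps pa - lp) - ls*mu_p fpd fps pa))
     + (1-ls)*mu_p fpd fps pa/(pq*fsd*(mu_p fpd fps pa - lp) - ls*mu_p fpd fps pa)"
proof -
  define t where "t = mu_p fpd fps pa"
  define s where "s = pq*fsd"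
  define U where "U = t - lp"
  define E where "E = s*U - ls*t"
  have nz: "U \<noteq> 0" "E \<noteq> 0" "ls \<noteq> 0" using assms unfolding t_def U_def E_def s_def by auto
  have C: "(ls - pq * fsd) * t + pq * fsd * lp = - E" unfolding E_def U_def s_def by (simp add: algebra_simps)
  have "D_s fpd fps fsd pq pa lp ls = (lp * ls * (s*(t-1)) + (ls^2 - ls) * U * (U + lp)) / (U * (-E)) / ls"
    unfolding D_s_def N_s_def Let_def t_def[symmetric] C[symmetric] U_def s_def by simp
  also have "\<dots> = lp*s*(1-t)/(U*E) + (1-ls)*t/E"
    using nz unfolding U_def by (simp add: field_simps power2_eq_square)
  finally show ?thesis unfolding t_def s_def U_def E_def .
qed

lemma H_mono:
  fixes s ls l t1 t2 :: real
  assumes "t1 < t2" "l < t1" "t2 < 1" "0 < s" "ls < 1" "0 < l" "0 < ls"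
    and "ls * t1 < s*(t1 - l)" "ls * t2 < s*(t2 - l)"
  shows "l*s*(1-t2)/((t2-l)*(s*(t2-l) - ls*t2)) + (1-ls)*t2/(s*(t2-l) - ls*t2)
       < l*s*(1-t1)/((t1-l)*(s*(t1-l) - ls*t1)) + (1-ls)*t1/(s*(t1-l) - ls*t1)"
proof -
  define E1 where "E1 = s*(t1-l) - ls*t1"
  define E2 where "E2 = s*(t2-l) - ls*t2"
  have E1: "E1 > 0" and E2: "E2 > 0" using assms unfolding E1_def E2_def by auto
  have "s*t1 > ls*t1" using assms by (smt (verit) mult_left_mono)
  hence sls: "s > ls" using assms by (simp add: mult_strict_right_mono mult.commute)
  have "E2 - E1 = (s-ls)*(t2-t1)" unfolding E1_def E2_def by (simp add: algebra_simps)
  moreover have "(s-ls)*(t2-t1) > 0" using sls assms by simp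
  ultimately have E12: "E1 < E2" by simp
  have U12: "(t1-l)*E1 < (t2-l)*E2" using E1 E12 assms by (intro mult_strict_mono) auto
  have U1: "(t1-l)*E1 > 0" using E1 assms by simp
  have n: "0 \<le> l*s*(1-t2)" "l*s*(1-t2) < l*s*(1-t1)" using assms by auto
  have T1: "l*s*(1-t2)/((t2-l)*E2) < l*s*(1-t1)/((t1-l)*E1)"
    by (rule frac_less[OF n U1]) (use U12 in simp)
  have "t1*E2 - t2*E1 = s*l*(t2-t1)" unfolding E1_def E2_def by (simp add: algebra_simps)
  moreover have "s*l*(t2-t1) \<ge> 0" using assms by simp
  ultimately have "t2*E1 \<le> t1*E2" by simp
  hence "t2/E2 \<le> t1/E1" using E1 E2 by (simp add: divide_le_eq le_divide_eq mult.commute)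
  hence T2: "(1-ls)*t2/E2 \<le> (1-ls)*t1/E1" using assms
    by (metis mult_left_mono diff_ge_0_iff_ge less_eq_real_def times_divide_eq_right)
  show ?thesis using T1 T2 unfolding E1_def E2_def by linarith
qed


theorem lemma4:
  fixes fpd fps fsd pq lp ls :: real
  assumes "0 < fpd" "fpd < 1" "0 < fps" "fps < 1" "0 < fsd" "fsd < 1" "fpd < fsd"
    and "0 < lp" "lp < 1" "0 < ls" "ls < 1" "0 < pq" "pq < 1"
  defines "S \<equiv> PA_set fpd fps fsd pq lp ls"
  shows "(pq < 1 - fpd / fsd \<longrightarrow>
            (\<forall>x\<in>S. \<forall>y\<in>S. x < y \<longrightarrow> D_p fpd fps fsd pq y lp < D_p fpd fps fsd pq x lp))
       \<and> (pq > 1 - fpd / fsd \<longrightarrow>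
            (\<forall>x\<in>S. \<forall>y\<in>S. x < y \<longrightarrow> D_p fpd fps fsd pq x lp < D_p fpd fps fsd pq y lp))
       \<and> (pq = 1 - fpd / fsd \<longrightarrow>
            (\<forall>x\<in>S. \<forall>y\<in>S. D_p fpd fps fsd pq x lp = D_p fpd fps fsd pq y lp))
       \<and> (\<forall>x\<in>S. \<forall>y\<in>S. x < y \<longrightarrow> D_s fpd fps fsd pq y lp ls < D_s fpd fps fsd pq x lp ls)"
proof -
  define F where "F = (1-pq)*fsd"
  define mu where "mu = mu_p fpd fps"
  note facts = S_facts[OF assms(1-6,8-13), folded S_def mu_def F_def]
  have fpos: "fps*(1-fpd) > 0" using assms by simp
  have mumono: "mu x < mu y" if "x < y" for x y
    unfolding mu_def mu_p_def a_val_def using fpos that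
    by (simp add: mult.assoc mult_strict_right_mono)
  have Dp: "D_p fpd fps fsd pq x lp = GF F fpd lp (mu x)" if "x \<in> S" for x
    unfolding F_def mu_def by (rule Dp_eq) (use facts[OF that] assms in \<open>auto simp: mu_def F_def\<close>)
  have cond: "fpd \<le> t \<and> t \<le> 1 \<and> lp < t \<and> (F-lp)*t - lp*(F-fpd) > 0"
    if "x \<in> S" "y \<in> S" "mu x \<le> t" "t \<le> mu y" for x y t
  proof -
    note fx = facts[OF that(1)] and fy = facts[OF that(2)]
    have "(F-lp)*t \<ge> (F-lp)*(mu x) \<or> (F-lp)*t \<ge> (F-lp)*(mu y)"
      by (cases "F - lp \<ge> 0") (use that in \<open>auto intro: mult_left_mono mult_left_mono_neg\<close>)
    thus ?thesis using fx fy that by auto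
  qed
  have Fc: "(pq < 1 - fpd / fsd) = (F > fpd)" "(pq > 1 - fpd / fsd) = (F < fpd)"
     "(pq = 1 - fpd / fsd) = (F = fpd)"
    unfolding F_def using assms by (auto simp: field_simps)
  have P1: "F > fpd \<longrightarrow> (\<forall>x\<in>S. \<forall>y\<in>S. x < y \<longrightarrow> D_p fpd fps fsd pq y lp < D_p fpd fps fsd pq x lp)"
  proof (intro impI ballI allI)
    fix x y assume h: "F > fpd" "x \<in> S" "y \<in> S" "x < y"
    show "D_p fpd fps fsd pq y lp < D_p fpd fps fsd pq x lp"
      unfolding Dp[OF h(2)] Dp[OF h(3)]
      by (rule GF_strict(1)[OF mumono[OF h(4)] assms(1,8,9) cond[OF h(2,3)] h(1)])
  qed
  have P2: "F < fpd \<longrightarrow> (\<forall>x\<in>S. \<forall>y\<in>S. x < y \<longrightarrow> D_p fpd fps fsd pq x lp < D_p fpd fps fsd pq y lp)"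
  proof (intro impI ballI allI)
    fix x y assume h: "F < fpd" "x \<in> S" "y \<in> S" "x < y"
    show "D_p fpd fps fsd pq x lp < D_p fpd fps fsd pq y lp"
      unfolding Dp[OF h(2)] Dp[OF h(3)]
      by (rule GF_strict(2)[OF mumono[OF h(4)] assms(1,8,9) cond[OF h(2,3)] h(1)])
  qed
  have P3: "F = fpd \<longrightarrow> (\<forall>x\<in>S. \<forall>y\<in>S. D_p fpd fps fsd pq x lp = D_p fpd fps fsd pq y lp)"
  proof (intro impI ballI)
    fix x y assume h: "F = fpd" "x \<in> S" "y \<in> S"
    have "D_p fpd fps fsd pq z lp = 1 + (1-fpd)/(fpd-lp)" if "z \<in> S" for z
    proof -
      note fz = facts[OF that]
      have "GF fpd fpd lp (mu z) = 1 + (1-fpd)/(fpd-lp)"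
        by (rule GF_const) (use fz h assms in auto)
      thus ?thesis using Dp[OF that] h by simp
    qed
    thus "D_p fpd fps fsd pq x lp = D_p fpd fps fsd pq y lp" using h by simp
  qed
  have P4: "\<forall>x\<in>S. \<forall>y\<in>S. x < y \<longrightarrow> D_s fpd fps fsd pq y lp ls < D_s fpd fps fsd pq x lp ls"
  proof (intro ballI impI)
    fix x y assume h: "x \<in> S" "y \<in> S" "x < y"
    note fx = facts[OF h(1)] and fy = facts[OF h(2)]
    have hm: "lp*(pq*fsd)*(1-mu y)/((mu y-lp)*(pq*fsd*(mu y-lp) - ls*mu y)) + (1-ls)*mu y/(pq*fsd*(mu y-lp) - ls*mu y)
       < lp*(pq*fsd)*(1-mu x)/((mu x-lp)*(pq*fsd*(mu x-lp) - ls*mu x)) + (1-ls)*mu x/(pq*fsd*(mu x-lp) - ls*mu x)"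
      by (rule H_mono) (use mumono[OF h(3)] fx fy assms in auto)
    show "D_s fpd fps fsd pq y lp ls < D_s fpd fps fsd pq x lp ls"
      unfolding Ds_eq[OF assms(10) fy(3)[unfolded mu_def] assms(8) fy(5)[unfolded mu_def]]
        Ds_eq[OF assms(10) fx(3)[unfolded mu_def] assms(8) fx(5)[unfolded mu_def]]
      using hm unfolding mu_def .
  qed
  show ?thesis unfolding Fc using P1 P2 P3 P4 by blast
qed

end
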